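(* Let $A\in\mathbb R^{q\times n}$, $b\in\mathbb R^q$, $c=(c_1,\dots,c_p):\mathbb R^n\to\mathbb R^p$ with each $c_i$ concave and twice continuously differentiable, and $\varepsilon>0$. For $x\in\mathbb R^n$, $y=(y^E,y^I)\in\mathbb R^q\times\mathbb R^p$, $z^I\in\mathbb R^p$ let $$G(x,y,z^I)=\begin{bmatrix}A^Ty^E+\mathcal Jc(x)^Ty^I\\ Ax-b+y^E\\ c(x)+y^I-z^I\end{bmatrix},\qquad F_\varepsilon(x,y,z^I)=\begin{bmatrix}G(x,y,z^I)\\ \Psi_\varepsilon(y^I,z^I)\end{bmatrix},$$ and $\Phi(\varepsilon)=\{(x,y^E,y^I,z^I)\in\mathbb R^n\times\mathbb R^q\times\mathbb R^p\times\mathbb R^p: F_\varepsilon(x,y,z^I)=0\}$. Let $(x,y,z^I)\in\Phi(\varepsilon)$ and suppose that the $n\times n$ matrix $$\sum_{i=1}^p y^I_i\nabla^2c_i(x)-A^TA-\mathcal Jc(x)^T\mathcal J_{z^I}\Psi_\varepsilon(y^I,z^I)\mathcal Jc(x)$$ is nonsingular. Then the Jacobian $\mathcal JF_\varepsilon(x,y,z^I)$ has full row rank, and $$T_{\Phi(\varepsilon)}(x,y,z^I)=\{d\in\mathbb R^n\times\mathbb R^{q+p}\times\mathbb R^p:\mathcal JF_\varepsilon(x,y,z^I)d=0\},$$ $$N_{\Phi(\varepsilon)}(x,y,z^I)=\widehat N_{\Phi(\varepsilon)}(x,y,z^I)=\mathcal JF_\varepsilon(x,y,z^I)^T\mathbb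 R^{n+q+p+p}.$$
   Context: $\mathcal Jc(x)$ is the $p\times n$ Jacobian of $c$. $\psi_\varepsilon(a,b)=a+b-\sqrt{a^2+b^2+2\varepsilon^2}$ (smoothing Fischer–Burmeister function) and $\Psi_\varepsilon(y^I,z^I)=(\psi_\varepsilon(y^I_1,z^I_1),\dots,\psi_\varepsilon(y^I_p,z^I_p))$; $\mathcal J_{z^I}\Psi_\varepsilon(y^I,z^I)$ is the diagonal matrix with entries $1-z^I_i/\sqrt{(y^I_i)^2+(z^I_i)^2+2\varepsilon^2}$. The Jacobian of $F_\varepsilon$ with respect to $(x,y^E,y^I,z^I)$ is $\begin{bmatrix}\sum_i y^I_i\nabla^2c_i(x) & A^T & \mathcal Jc(x)^T & 0\\ A & I & 0 & 0\\ \mathcal Jc(x) & 0 & I & -I\\ 0 & 0 & \mathcal J_{y^I}\Psi_\varepsilon & \mathcal J_{z^I}\Psi_\varepsilon\end{bmatrix}$. $T_C$, $\widehat N_C$, $N_C$ denote the tangent cone, regular normal cone and limiting normal cone of a closed set $C$. *)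

theory Defs
  imports "HOL-Analysis.Analysis"
begin

definition tangent_cone :: "'a::real_normed_vector set \<Rightarrow> 'a \<Rightarrow> 'a set" where
  "tangent_cone C x = {d. \<exists>t xs. (\<forall>k. 0 < t k) \<and> t \<longlonglongrightarrow> 0 \<and> (\<forall>k. xs k \<in> C)
      \<and> (\<lambda>k. (xs k - x) /\<^sub>R t k) \<longlonglongrightarrow> d}"

definition regular_normal_cone :: "'a::real_inner set \<Rightarrow> 'a \<Rightarrow> 'a set" where
  "regular_normal_cone C x = {v. \<forall>e>0. \<exists>\<delta>>0. \<forall>y\<in>C. norm (y - x) < \<delta> \<longrightarrow>
      inner v (y - x) \<le> e * norm (y - x)}"

definition limiting_normal_cone :: "'a::real_inner set \<Rightarrow> 'a \<Rightarrow> 'a set" where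
  "limiting_normal_cone C x = {v. \<exists>xs vs. (\<forall>k. xs k \<in> C) \<and> xs \<longlonglongrightarrow> x \<and> vs \<longlonglongrightarrow> v
      \<and> (\<forall>k. vs k \<in> regular_normal_cone C (xs k))}"

definition psi :: "real \<Rightarrow> real \<Rightarrow> real \<Rightarrow> real" where
  "psi \<epsilon> a b = a + b - sqrt (a\<^sup>2 + b\<^sup>2 + 2 * \<epsilon>\<^sup>2)"

definition Psi :: "real \<Rightarrow> real^'p \<Rightarrow> real^'p \<Rightarrow> real^'p" where
  "Psi \<epsilon> y z = (\<chi> i. psi \<epsilon> (y $ i) (z $ i))"

definition diag_mat :: "real^'p \<Rightarrow> real^'p^'p" where
  "diag_mat d = (\<chi> i j. if i = j then d $ i else 0)"

definition JyPsi :: "real \<Rightarrow> real^'p \<Rightarrow> real^'p \<Rightarrow> real^'p^'p" where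
  "JyPsi \<epsilon> y z = diag_mat (\<chi> i. 1 - y $ i / sqrt ((y $ i)\<^sup>2 + (z $ i)\<^sup>2 + 2 * \<epsilon>\<^sup>2))"

definition JzPsi :: "real \<Rightarrow> real^'p \<Rightarrow> real^'p \<Rightarrow> real^'p^'p" where
  "JzPsi \<epsilon> y z = diag_mat (\<chi> i. 1 - z $ i / sqrt ((y $ i)\<^sup>2 + (z $ i)\<^sup>2 + 2 * \<epsilon>\<^sup>2))"

text \<open>The map F_eps, with Jacobian Jc of c; G is its first three blocks.\<close>

definition F_eps :: "real \<Rightarrow> real^'n^'q \<Rightarrow> real^'q \<Rightarrow> (real^'n \<Rightarrow> real^'p)
    \<Rightarrow> (real^'n \<Rightarrow> real^'n^'p)
    \<Rightarrow> (real^'n) \<times> (real^'q) \<times> (real^'p) \<times> (real^'p) \<Rightarrow> (real^'n) \<times> (real^'q) \<times> (real^'p) \<times> (real^'p)" where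
  "F_eps \<epsilon> A b c Jc = (\<lambda>(x, yE, yI, zI).
     (transpose A *v yE + transpose (Jc x) *v yI,
      A *v x - b + yE,
      c x + yI - zI,
      Psi \<epsilon> yI zI))"

definition Phi :: "real \<Rightarrow> real^'n^'q \<Rightarrow> real^'q \<Rightarrow> (real^'n \<Rightarrow> real^'p)
    \<Rightarrow> (real^'n \<Rightarrow> real^'n^'p) \<Rightarrow> ((real^'n) \<times> (real^'q) \<times> (real^'p) \<times> (real^'p)) set" where
  "Phi \<epsilon> A b c Jc = {w. F_eps \<epsilon> A b c Jc w = 0}"

definition hess_sum :: "('p \<Rightarrow> real^'n \<Rightarrow> real^'n^'n) \<Rightarrow> real^'n \<Rightarrow> real^'p \<Rightarrow> real^'n^'n" where
  "hess_sum H x yI = (\<Sum>i\<in>UNIV. yI $ i *\<^sub>R H i x)"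

definition JF :: "real \<Rightarrow> real^'n^'q \<Rightarrow> (real^'n \<Rightarrow> real^'n^'p) \<Rightarrow> ('p \<Rightarrow> real^'n \<Rightarrow> real^'n^'n)
    \<Rightarrow> (real^'n) \<times> (real^'q) \<times> (real^'p) \<times> (real^'p)
    \<Rightarrow> (real^'n) \<times> (real^'q) \<times> (real^'p) \<times> (real^'p) \<Rightarrow> (real^'n) \<times> (real^'q) \<times> (real^'p) \<times> (real^'p)" where
  "JF \<epsilon> A Jc H = (\<lambda>(x, yE, yI, zI) (dx, dyE, dyI, dzI).
     (hess_sum H x yI *v dx + transpose A *v dyE + transpose (Jc x) *v dyI,
      A *v dx + dyE,
      Jc x *v dx + dyI - dzI,
      JyPsi \<epsilon> yI zI *v dyI + JzPsi \<epsilon> yI zI *v dzI))"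

definition JF_T :: "real \<Rightarrow> real^'n^'q \<Rightarrow> (real^'n \<Rightarrow> real^'n^'p) \<Rightarrow> ('p \<Rightarrow> real^'n \<Rightarrow> real^'n^'n)
    \<Rightarrow> (real^'n) \<times> (real^'q) \<times> (real^'p) \<times> (real^'p)
    \<Rightarrow> (real^'n) \<times> (real^'q) \<times> (real^'p) \<times> (real^'p) \<Rightarrow> (real^'n) \<times> (real^'q) \<times> (real^'p) \<times> (real^'p)" where
  "JF_T \<epsilon> A Jc H = (\<lambda>(x, yE, yI, zI) (w1, w2, w3, w4).
     (transpose (hess_sum H x yI) *v w1 + transpose A *v w2 + transpose (Jc x) *v w3,
      A *v w1 + w2,
      Jc x *v w1 + w3 + transpose (JyPsi \<epsilon> yI zI) *v w4,
      - w3 + transpose (JzPsi \<epsilon> yI zI) *v w4))"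

end

theory Submission imports Defs begin

lemma vec_lambda_as_sum: "(\<chi> i. g i) = (\<Sum>i\<in>UNIV. g i *\<^sub>R axis i (1::real))"
proof -
  have "(\<Sum>i\<in>UNIV. g i *\<^sub>R axis i (1::real)) $ j = g j" for j
  proof -
    have "(\<Sum>i\<in>UNIV. g i *\<^sub>R axis i (1::real)) $ j = (\<Sum>i\<in>UNIV. if j = i then g i else 0)"
      unfolding sum_component by (intro sum.cong) (auto simp: axis_def)
    then show ?thesis by simp
  qed
  then show ?thesis by (simp add: vec_eq_iff)
qed

lemma has_derivative_vec_lambda:
  fixes f :: "'a::real_normed_vector \<Rightarrow> 'i::finite \<Rightarrow> real"
  assumes "\<And>i. ((\<lambda>x. f x i) has_derivative (\<lambda>h. f' h i)) F"
  shows "((\<lambda>x. \<chi> i. f x i) has_derivative (\<lambda>h. \<chi> i. f' h i)) F"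
proof -
  have "((\<lambda>x. \<Sum>i\<in>UNIV. f x i *\<^sub>R axis i (1::real)) has_derivative (\<lambda>h. \<Sum>i\<in>UNIV. f' h i *\<^sub>R axis i (1::real))) F"
    by (intro has_derivative_sum has_derivative_scaleR_left assms)
  then show ?thesis by (simp only: vec_lambda_as_sum)
qed

lemma diag_mat_mult: "(diag_mat d *v v) $ i = d $ i * v $ i"
proof -
  have "(diag_mat d *v v) $ i = (\<Sum>j\<in>UNIV. if i = j then d $ i * v $ j else 0)"
    unfolding diag_mat_def matrix_vector_mult_def vec_lambda_beta by (intro sum.cong) auto
  then show ?thesis by simp
qed

lemma transpose_diag: "transpose (diag_mat d) = diag_mat d"
  by (simp add: diag_mat_def transpose_def vec_eq_iff)

lemma transpose_as_sum: "transpose M *v y = (\<Sum>i\<in>UNIV. (y $ i) *\<^sub>R row i M)"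
  unfolding vec_eq_iff sum_component matrix_vector_mult_def transpose_def row_def
  by (simp add: mult.commute)

lemma hess_sum_mult: "hess_sum H x yI *v v = (\<Sum>i\<in>UNIV. yI $ i *\<^sub>R (H i x *v v))"
proof -
  have "(hess_sum H x yI *v v) $ j = (\<Sum>i\<in>UNIV. yI $ i *\<^sub>R (H i x *v v)) $ j" for j
  proof -
    have "(hess_sum H x yI *v v) $ j = (\<Sum>k\<in>UNIV. (\<Sum>i\<in>UNIV. yI $ i * H i x $ j $ k) * v $ k)"
      unfolding hess_sum_def matrix_vector_mult_def sum_component by simp
    also have "\<dots> = (\<Sum>k\<in>UNIV. \<Sum>i\<in>UNIV. yI $ i * (H i x $ j $ k * v $ k))"
      by (simp add: sum_distrib_right mult.assoc)
    also have "\<dots> = (\<Sum>i\<in>UNIV. \<Sum>k\<in>UNIV. yI $ i * (H i x $ j $ k * v $ k))"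
      by (rule sum.swap)
    also have "\<dots> = (\<Sum>i\<in>UNIV. yI $ i *\<^sub>R (H i x *v v)) $ j"
      unfolding matrix_vector_mult_def sum_component by (simp add: sum_distrib_left)
    finally show ?thesis .
  qed
  then show ?thesis by (simp add: vec_eq_iff)
qed

lemma mv_inner: "inner (M *v (v::real^'n)) (u::real^'m) = inner v (transpose M *v u)"
  by (metis dot_lmul_matrix inner_commute transpose_matrix_vector)

lemma isolated_pt:
  fixes F :: "'a::real_normed_vector \<Rightarrow> 'b::real_normed_vector"
  assumes deriv: "(F has_derivative L) (at w0)" and B: "B > 0" "\<And>h. B * norm h \<le> norm (L h)"
  obtains d where "d > 0" "\<And>w. F w = F w0 \<Longrightarrow> norm (w - w0) < d \<Longrightarrow> w = w0"
proof -
  have "B / 2 > 0" using B by simp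
  then obtain d where d: "d > 0" "\<And>y. norm (y - w0) < d \<Longrightarrow> norm (F y - F w0 - L (y - w0)) \<le> B / 2 * norm (y - w0)"
    using deriv unfolding has_derivative_at_alt by blast
  have "w = w0" if "F w = F w0" "norm (w - w0) < d" for w
  proof -
    have 1: "norm (L (w - w0)) \<le> B / 2 * norm (w - w0)" using d(2)[OF that(2)] that(1) by simp
    have 2: "B * norm (w - w0) \<le> norm (L (w - w0))" by (rule B(2))
    have "B * norm (w - w0) \<le> 0"
      using 1 2 norm_ge_zero[of "w - w0"] B(1) by linarith
    then have "norm (w - w0) \<le> 0" using B(1) by (simp add: mult_le_0_iff)
    then show ?thesis by simp
  qed
  then show ?thesis using that d(1) by blast
qed

theorem proposition4p1:
  fixes A :: "real^'n^'q" and b :: "real^'q"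
    and c :: "real^'n \<Rightarrow> real^'p"
    and Jc :: "real^'n \<Rightarrow> real^'n^'p"
    and H :: "'p \<Rightarrow> real^'n \<Rightarrow> real^'n^'n"
    and \<epsilon> :: real
    and x :: "real^'n" and yE :: "real^'q" and yI zI :: "real^'p"
  assumes concave: "\<And>i. concave_on UNIV (\<lambda>u. c u $ i)"
    and jac: "\<And>u. (c has_derivative (\<lambda>h. Jc u *v h)) (at u)"
    and hess: "\<And>i u. ((\<lambda>v. row i (Jc v)) has_derivative (\<lambda>h. H i u *v h)) (at u)"
    and hess_cont: "\<And>i. continuous_on UNIV (H i)"
    and eps: "\<epsilon> > 0"
    and mem: "(x, yE, yI, zI) \<in> Phi \<epsilon> A b c Jc"
    and nonsing: "invertible (hess_sum H x yI - transpose A ** A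
                     - transpose (Jc x) ** JzPsi \<epsilon> yI zI ** Jc x)"
  shows "range (JF \<epsilon> A Jc H (x, yE, yI, zI)) = UNIV
    \<and> tangent_cone (Phi \<epsilon> A b c Jc) (x, yE, yI, zI) = {d. JF \<epsilon> A Jc H (x, yE, yI, zI) d = 0}
    \<and> limiting_normal_cone (Phi \<epsilon> A b c Jc) (x, yE, yI, zI)
        = regular_normal_cone (Phi \<epsilon> A b c Jc) (x, yE, yI, zI)
    \<and> regular_normal_cone (Phi \<epsilon> A b c Jc) (x, yE, yI, zI)
        = range (JF_T \<epsilon> A Jc H (x, yE, yI, zI))"
proof -
  define w0 where "w0 = (x, yE, yI, zI)"
  define L where "L = JF \<epsilon> A Jc H w0"
  define LT where "LT = JF_T \<epsilon> A Jc H w0"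
  define F where "F = F_eps \<epsilon> A b c Jc"
  define C where "C = Phi \<epsilon> A b c Jc"
  define r where "r = (\<lambda>i. sqrt ((yI $ i)\<^sup>2 + (zI $ i)\<^sup>2 + 2 * \<epsilon>\<^sup>2))"
  define av where "av = (\<chi> i. 1 - yI $ i / r i)"
  define bv where "bv = (\<chi> i. 1 - zI $ i / r i)"
  have Dy: "JyPsi \<epsilon> yI zI = diag_mat av" by (simp add: JyPsi_def av_def r_def)
  have Dz: "JzPsi \<epsilon> yI zI = diag_mat bv" by (simp add: JzPsi_def bv_def r_def)
  have rpos: "r i > 0" for i
    unfolding r_def using eps by (intro real_sqrt_gt_zero) (simp add: add_nonneg_pos)
  have F0: "F w0 = 0" using mem by (simp add: F_def w0_def Phi_def)
  have psi0: "psi \<epsilon> (yI $ i) (zI $ i) = 0" for i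
  proof -
    have "Psi \<epsilon> yI zI = 0" using mem by (simp add: Phi_def F_eps_def zero_prod_def)
    then show ?thesis by (simp add: Psi_def vec_eq_iff)
  qed
  have ab1: "av $ i + bv $ i = 1" for i
  proof -
    have "yI $ i + zI $ i = r i" using psi0[of i] by (simp add: psi_def r_def)
    then have "r i * yI $ i + r i * zI $ i = r i * r i" by (simp add: distrib_left[symmetric])
    then show ?thesis using rpos[of i] by (simp add: av_def bv_def field_simps)
  qed
  have inj0: "d = 0" if Ld: "L d = 0" for d
  proof -
    obtain d1 d2 d3 d4 where d: "d = (d1, d2, d3, d4)" by (cases d) auto
    have e1: "hess_sum H x yI *v d1 + transpose A *v d2 + transpose (Jc x) *v d3 = 0"
      and e2: "A *v d1 + d2 = 0" and e3: "Jc x *v d1 + d3 - d4 = 0"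
      and e4: "diag_mat av *v d3 + diag_mat bv *v d4 = 0"
      using Ld unfolding d L_def w0_def JF_def by (simp_all add: zero_prod_def Dy Dz del: transpose_matrix_vector)
    define u where "u = Jc x *v d1"
    have d2eq: "d2 = - (A *v d1)" using e2 by (simp add: eq_neg_iff_add_eq_0 add.commute)
    have comp: "d4 $ i = av $ i * u $ i \<and> d3 $ i = - (bv $ i * u $ i)" for i
    proof -
      have c3: "u $ i + d3 $ i - d4 $ i = 0" using e3 unfolding u_def by (simp add: vec_eq_iff)
      have c4: "av $ i * d3 $ i + bv $ i * d4 $ i = 0" using e4 by (simp add: vec_eq_iff diag_mat_mult)
      have bv: "bv $ i = 1 - av $ i" using ab1[of i] by simp
      have d3i: "d3 $ i = d4 $ i - u $ i" using c3 by simp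
      have "av $ i * (d4 $ i - u $ i) + (1 - av $ i) * d4 $ i = 0" using c4 unfolding bv d3i .
      then have d4i: "d4 $ i = av $ i * u $ i" by (simp add: algebra_simps)
      have "d3 $ i = - ((1 - av $ i) * u $ i)" unfolding d3i d4i by (simp add: algebra_simps)
      then show ?thesis using d4i bv by simp
    qed
    have d3eq: "d3 = - (diag_mat bv *v u)" using comp by (simp add: vec_eq_iff diag_mat_mult)
    have neg: "\<And>(M::real^'a^'b) v. M *v (- v) = - (M *v v)"
      by (metis add.inverse_neutral diff_0 matrix_vector_mult_0_right matrix_vector_mult_diff_distrib)
    have "(hess_sum H x yI - transpose A ** A - transpose (Jc x) ** JzPsi \<epsilon> yI zI ** Jc x) *v d1
          = hess_sum H x yI *v d1 + transpose A *v d2 + transpose (Jc x) *v d3"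
      unfolding d2eq d3eq neg u_def Dz
      by (simp add: matrix_vector_mult_diff_rdistrib matrix_vector_mul_assoc matrix_mul_assoc del: transpose_matrix_vector)
    also have "\<dots> = 0" by (rule e1)
    finally have "(hess_sum H x yI - transpose A ** A - transpose (Jc x) ** JzPsi \<epsilon> yI zI ** Jc x) *v d1
        = (hess_sum H x yI - transpose A ** A - transpose (Jc x) ** JzPsi \<epsilon> yI zI ** Jc x) *v 0" by simp
    then have d1: "d1 = 0" by (rule injD[OF inj_matrix_vector_mult[OF nonsing]])
    have "u = 0" by (simp add: u_def d1)
    then show ?thesis using comp d2eq d1 by (simp add: d zero_prod_def vec_eq_iff)
  qed
  have deriv: "(F has_derivative L) (at w0)"
  proof -
    have tas: "\<And>u v. transpose (Jc u) *v v = (\<Sum>i\<in>UNIV. (v $ i) *\<^sub>R row i (Jc u))"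
      by (rule transpose_as_sum)
    have Feq: "F = (\<lambda>w. (transpose A *v fst (snd w) + (\<Sum>i\<in>UNIV. fst (snd (snd w)) $ i *\<^sub>R row i (Jc (fst w))),
        A *v fst w - b + fst (snd w),
        c (fst w) + fst (snd (snd w)) - snd (snd (snd w)),
        (\<chi> i. psi \<epsilon> (fst (snd (snd w)) $ i) (snd (snd (snd w)) $ i))))"
      by (rule ext) (simp add: F_def F_eps_def Psi_def tas split: prod.splits del: transpose_matrix_vector)
    have dP1: "((\<lambda>w::(real^'n) \<times> (real^'q) \<times> (real^'p) \<times> (real^'p). fst w) has_derivative (\<lambda>h. fst h)) (at w0)"
      by (rule has_derivative_fst[OF has_derivative_ident])
    have dP2: "((\<lambda>w::(real^'n) \<times> (real^'q) \<times> (real^'p) \<times> (real^'p). fst (snd w)) has_derivative (\<lambda>h. fst (snd h))) (at w0)"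
      by (rule has_derivative_fst[OF has_derivative_snd[OF has_derivative_ident]])
    have dP3: "((\<lambda>w::(real^'n) \<times> (real^'q) \<times> (real^'p) \<times> (real^'p). fst (snd (snd w))) has_derivative (\<lambda>h. fst (snd (snd h)))) (at w0)"
      by (rule has_derivative_fst[OF has_derivative_snd[OF has_derivative_snd[OF has_derivative_ident]]])
    have dP4: "((\<lambda>w::(real^'n) \<times> (real^'q) \<times> (real^'p) \<times> (real^'p). snd (snd (snd w))) has_derivative (\<lambda>h. snd (snd (snd h)))) (at w0)"
      by (rule has_derivative_snd[OF has_derivative_snd[OF has_derivative_snd[OF has_derivative_ident]]])
    have dP3i: "((\<lambda>w::(real^'n) \<times> (real^'q) \<times> (real^'p) \<times> (real^'p). fst (snd (snd w)) $ i) has_derivative (\<lambda>h. fst (snd (snd h)) $ i)) (at w0)" for i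
      by (rule bounded_linear.has_derivative[OF bounded_linear_vec_nth dP3])
    have dP4i: "((\<lambda>w::(real^'n) \<times> (real^'q) \<times> (real^'p) \<times> (real^'p). snd (snd (snd w)) $ i) has_derivative (\<lambda>h. snd (snd (snd h)) $ i)) (at w0)" for i
      by (rule bounded_linear.has_derivative[OF bounded_linear_vec_nth dP4])
    have drow: "((\<lambda>w. row i (Jc (fst w))) has_derivative (\<lambda>h. H i x *v fst h)) (at w0)" for i
      using has_derivative_compose[OF dP1 hess[of i "fst w0"]] by (simp add: w0_def)
    have d1: "((\<lambda>w. transpose A *v fst (snd w) + (\<Sum>i\<in>UNIV. fst (snd (snd w)) $ i *\<^sub>R row i (Jc (fst w))))
       has_derivative (\<lambda>h. transpose A *v fst (snd h) + (\<Sum>i\<in>UNIV. yI $ i *\<^sub>R (H i x *v fst h) + fst (snd (snd h)) $ i *\<^sub>R row i (Jc x)))) (at w0)"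
    proof (rule has_derivative_add)
      show "((\<lambda>w. transpose A *v fst (snd w)) has_derivative (\<lambda>h. transpose A *v fst (snd h))) (at w0)"
        by (rule bounded_linear.has_derivative[OF matrix_vector_mul_bounded_linear dP2])
      show "((\<lambda>w. \<Sum>i\<in>UNIV. fst (snd (snd w)) $ i *\<^sub>R row i (Jc (fst w))) has_derivative
          (\<lambda>h. \<Sum>i\<in>UNIV. yI $ i *\<^sub>R (H i x *v fst h) + fst (snd (snd h)) $ i *\<^sub>R row i (Jc x))) (at w0)"
      proof (rule has_derivative_sum)
        fix i
        show "((\<lambda>w. fst (snd (snd w)) $ i *\<^sub>R row i (Jc (fst w))) has_derivative
          (\<lambda>h. yI $ i *\<^sub>R (H i x *v fst h) + fst (snd (snd h)) $ i *\<^sub>R row i (Jc x))) (at w0)"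
          using has_derivative_scaleR[OF dP3i[of i] drow[of i]] by (simp add: w0_def)
      qed
    qed
    have d2: "((\<lambda>w. A *v fst w - b + fst (snd w)) has_derivative (\<lambda>h. A *v fst h - 0 + fst (snd h))) (at w0)"
      by (intro has_derivative_add has_derivative_diff dP2 has_derivative_const
          bounded_linear.has_derivative[OF matrix_vector_mul_bounded_linear dP1])
    have d3: "((\<lambda>w. c (fst w) + fst (snd (snd w)) - snd (snd (snd w))) has_derivative
        (\<lambda>h. Jc x *v fst h + fst (snd (snd h)) - snd (snd (snd h)))) (at w0)"
    proof -
      have "((\<lambda>w. c (fst w)) has_derivative (\<lambda>h. Jc x *v fst h)) (at w0)"
        using has_derivative_compose[OF dP1 jac[of "fst w0"]] by (simp add: w0_def)
      then show ?thesis by (intro has_derivative_add has_derivative_diff dP3 dP4)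
    qed
    have d4i: "((\<lambda>w. psi \<epsilon> (fst (snd (snd w)) $ i) (snd (snd (snd w)) $ i)) has_derivative
        (\<lambda>h. av $ i * fst (snd (snd h)) $ i + bv $ i * snd (snd (snd h)) $ i)) (at w0)" for i
    proof -
      define f where "f = (\<lambda>w::(real^'n) \<times> (real^'q) \<times> (real^'p) \<times> (real^'p). fst (snd (snd w)) $ i)"
      define g where "g = (\<lambda>w::(real^'n) \<times> (real^'q) \<times> (real^'p) \<times> (real^'p). snd (snd (snd w)) $ i)"
      have df: "(f has_derivative f) (at w0)" unfolding f_def by (rule dP3i)
      have dg: "(g has_derivative g) (at w0)" unfolding g_def by (rule dP4i)
      have fw0: "f w0 = yI $ i" and gw0: "g w0 = zI $ i" by (simp_all add: f_def g_def w0_def)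
      have dq: "((\<lambda>w. f w * f w + g w * g w + 2 * \<epsilon>\<^sup>2) has_derivative
          (\<lambda>h. (f w0 * f h + f h * f w0) + (g w0 * g h + g h * g w0) + 0)) (at w0)"
        by (intro has_derivative_add has_derivative_mult df dg has_derivative_const)
      have qpos: "0 < f w0 * f w0 + g w0 * g w0 + 2 * \<epsilon>\<^sup>2"
        using eps by (simp add: add_nonneg_pos)
      have ds: "((\<lambda>w. sqrt (f w * f w + g w * g w + 2 * \<epsilon>\<^sup>2)) has_derivative
          (\<lambda>h. ((f w0 * f h + f h * f w0) + (g w0 * g h + g h * g w0) + 0) * (inverse (sqrt (f w0 * f w0 + g w0 * g w0 + 2 * \<epsilon>\<^sup>2)) / 2))) (at w0)"
        by (rule DERIV_compose_FDERIV[OF DERIV_real_sqrt[OF qpos] dq])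
      have rr: "sqrt (f w0 * f w0 + g w0 * g w0 + 2 * \<epsilon>\<^sup>2) = r i"
        by (simp add: fw0 gw0 r_def power2_eq_square)
      have dpsi: "((\<lambda>w. f w + g w - sqrt (f w * f w + g w * g w + 2 * \<epsilon>\<^sup>2)) has_derivative
          (\<lambda>h. f h + g h - ((f w0 * f h + f h * f w0) + (g w0 * g h + g h * g w0) + 0) * (inverse (sqrt (f w0 * f w0 + g w0 * g w0 + 2 * \<epsilon>\<^sup>2)) / 2))) (at w0)"
        by (intro has_derivative_add has_derivative_diff df dg ds)
      have eqd: "(\<lambda>h. f h + g h - ((f w0 * f h + f h * f w0) + (g w0 * g h + g h * g w0) + 0) * (inverse (sqrt (f w0 * f w0 + g w0 * g w0 + 2 * \<epsilon>\<^sup>2)) / 2))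
          = (\<lambda>h. av $ i * f h + bv $ i * g h)"
      proof (rule ext)
        fix h
        have rr': "sqrt (yI $ i * yI $ i + zI $ i * zI $ i + 2 * \<epsilon>\<^sup>2) = r i"
          by (simp add: r_def power2_eq_square)
        have rne: "r i \<noteq> 0" using rpos[of i] by simp
        show "f h + g h - ((f w0 * f h + f h * f w0) + (g w0 * g h + g h * g w0) + 0) * (inverse (sqrt (f w0 * f w0 + g w0 * g w0 + 2 * \<epsilon>\<^sup>2)) / 2)
          = av $ i * f h + bv $ i * g h"
          unfolding fw0 gw0 rr' using rne by (simp add: av_def bv_def field_simps)
      qed
      have eqf: "(\<lambda>w. psi \<epsilon> (fst (snd (snd w)) $ i) (snd (snd (snd w)) $ i)) = (\<lambda>w. f w + g w - sqrt (f w * f w + g w * g w + 2 * \<epsilon>\<^sup>2))"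
        by (simp add: psi_def f_def g_def power2_eq_square)
      show ?thesis using dpsi unfolding eqd eqf by (simp add: f_def g_def)
    qed
    have d4: "((\<lambda>w. \<chi> i. psi \<epsilon> (fst (snd (snd w)) $ i) (snd (snd (snd w)) $ i)) has_derivative
        (\<lambda>h. \<chi> i. av $ i * fst (snd (snd h)) $ i + bv $ i * snd (snd (snd h)) $ i)) (at w0)"
      by (rule has_derivative_vec_lambda[OF d4i])
    have all: "(F has_derivative (\<lambda>h. (transpose A *v fst (snd h) + (\<Sum>i\<in>UNIV. yI $ i *\<^sub>R (H i x *v fst h) + fst (snd (snd h)) $ i *\<^sub>R row i (Jc x)),
        A *v fst h - 0 + fst (snd h),
        Jc x *v fst h + fst (snd (snd h)) - snd (snd (snd h)),
        \<chi> i. av $ i * fst (snd (snd h)) $ i + bv $ i * snd (snd (snd h)) $ i))) (at w0)"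
      unfolding Feq by (intro has_derivative_Pair d1 d2 d3 d4)
    have Leq: "(\<lambda>h. (transpose A *v fst (snd h) + (\<Sum>i\<in>UNIV. yI $ i *\<^sub>R (H i x *v fst h) + fst (snd (snd h)) $ i *\<^sub>R row i (Jc x)),
        A *v fst h - 0 + fst (snd h),
        Jc x *v fst h + fst (snd (snd h)) - snd (snd (snd h)),
        \<chi> i. av $ i * fst (snd (snd h)) $ i + bv $ i * snd (snd (snd h)) $ i)) = L"
    proof (rule ext)
      fix h :: "(real^'n) \<times> (real^'q) \<times> (real^'p) \<times> (real^'p)"
      obtain h1 h2 h3 h4 where h: "h = (h1, h2, h3, h4)" by (cases h) auto
      have "(\<chi> i. av $ i * h3 $ i + bv $ i * h4 $ i) = diag_mat av *v h3 + diag_mat bv *v h4"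
        by (simp add: vec_eq_iff diag_mat_mult)
      then show "(transpose A *v fst (snd h) + (\<Sum>i\<in>UNIV. yI $ i *\<^sub>R (H i x *v fst h) + fst (snd (snd h)) $ i *\<^sub>R row i (Jc x)),
        A *v fst h - 0 + fst (snd h),
        Jc x *v fst h + fst (snd (snd h)) - snd (snd (snd h)),
        \<chi> i. av $ i * fst (snd (snd h)) $ i + bv $ i * snd (snd (snd h)) $ i) = L h"
        unfolding h L_def w0_def JF_def
        by (simp add: sum.distrib hess_sum_mult tas Dy Dz del: transpose_matrix_vector)
    qed
    show ?thesis using all unfolding Leq .
  qed
  have linL: "linear L" using deriv has_derivative_linear by blast
  have injL: "inj L" using inj0 linL by (simp add: linear_inj_iff_eq_0)
  have surjL: "surj L" using linL injL by (simp add: linear_injective_imp_surjective)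
  obtain B where B: "B > 0" "\<And>h. B * norm h \<le> norm (L h)"
    using linear_inj_bounded_below_pos[OF linL injL] by blast
  obtain \<delta> where \<delta>0: "\<delta> > 0" "\<And>w. F w = F w0 \<Longrightarrow> norm (w - w0) < \<delta> \<Longrightarrow> w = w0"
    using isolated_pt[OF deriv B(1) B(2)] by blast
  have \<delta>: "\<delta> > 0" "\<And>w. w \<in> C \<Longrightarrow> norm (w - w0) < \<delta> \<Longrightarrow> w = w0"
    using \<delta>0 F0 by (auto simp: C_def Phi_def F_def)
  have w0C: "w0 \<in> C" using mem by (simp add: C_def w0_def)
  have tang: "tangent_cone C w0 = {0}"
  proof
    show "tangent_cone C w0 \<subseteq> {0}"
    proof
      fix d assume "d \<in> tangent_cone C w0"
      then obtain t xs where t: "\<forall>k. 0 < t k" "t \<longlonglongrightarrow> 0" "\<forall>k. xs k \<in> C"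
        "(\<lambda>k. (xs k - w0) /\<^sub>R t k) \<longlonglongrightarrow> d"
        unfolding tangent_cone_def by blast
      have eq: "xs k - w0 = t k *\<^sub>R ((xs k - w0) /\<^sub>R t k)" for k
        using t(1) by (simp add: less_imp_neq[symmetric])
      have "(\<lambda>k. t k *\<^sub>R ((xs k - w0) /\<^sub>R t k)) \<longlonglongrightarrow> 0 *\<^sub>R d"
        by (intro tendsto_scaleR t(2) t(4))
      moreover have fx: "(\<lambda>k. xs k - w0) = (\<lambda>k. t k *\<^sub>R ((xs k - w0) /\<^sub>R t k))"
        by (rule ext) (rule eq)
      ultimately have "(\<lambda>k. xs k - w0) \<longlonglongrightarrow> 0 *\<^sub>R d" by (simp only: fx)
      then have "(\<lambda>k. xs k - w0) \<longlonglongrightarrow> 0" by simp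
      then have "(\<lambda>k. norm (xs k - w0)) \<longlonglongrightarrow> 0" by (simp add: tendsto_norm_zero)
      then have "eventually (\<lambda>k. norm (xs k - w0) < \<delta>) sequentially"
        using \<delta>(1) by (simp add: order_tendstoD(2))
      then have "eventually (\<lambda>k. (xs k - w0) /\<^sub>R t k = 0) sequentially"
        by eventually_elim (use \<delta>(2) t(3) in auto)
      then have "(\<lambda>k. (0::(real^'n) \<times> (real^'q) \<times> (real^'p) \<times> (real^'p))) \<longlonglongrightarrow> d"
        using Lim_transform_eventually[OF t(4), of "\<lambda>k. 0"] by simp
      then show "d \<in> {0}" by (simp add: LIMSEQ_const_iff)
    qed
  next
    show "{0} \<subseteq> tangent_cone C w0"
    proof -
      have "0 \<in> tangent_cone C w0"
        unfolding tangent_cone_def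
        by (rule CollectI, rule exI[of _ "\<lambda>k. inverse (real (Suc k))"], rule exI[of _ "\<lambda>k. w0"])
           (use LIMSEQ_inverse_real_of_nat in \<open>simp add: w0C\<close>)
      then show ?thesis by simp
    qed
  qed
  have reg: "regular_normal_cone C w0 = UNIV"
  proof -
    have "v \<in> regular_normal_cone C w0" for v
      unfolding regular_normal_cone_def
    proof (intro CollectI allI impI)
      fix e :: real assume "e > 0"
      show "\<exists>\<delta>>0. \<forall>y\<in>C. norm (y - w0) < \<delta> \<longrightarrow> inner v (y - w0) \<le> e * norm (y - w0)"
      proof (intro exI[of _ \<delta>] conjI ballI impI)
        fix y assume "y \<in> C" "norm (y - w0) < \<delta>"
        then have "y = w0" using \<delta>(2) by blast
        then show "inner v (y - w0) \<le> e * norm (y - w0)" by simp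
      qed (rule \<delta>(1))
    qed
    then show ?thesis by blast
  qed
  have lim: "limiting_normal_cone C w0 = UNIV"
  proof -
    have "v \<in> limiting_normal_cone C w0" for v
      unfolding limiting_normal_cone_def
      by (rule CollectI, rule exI[of _ "\<lambda>k. w0"], rule exI[of _ "\<lambda>k. v"]) (simp add: w0C reg)
    then show ?thesis by blast
  qed
  have adj: "inner (L d) v = inner d (LT v)" for d v
  proof -
    obtain d1 d2 d3 d4 where d: "d = (d1, d2, d3, d4)" by (cases d) auto
    obtain v1 v2 v3 v4 where v: "v = (v1, v2, v3, v4)" by (cases v) auto
    show ?thesis
      unfolding d v L_def LT_def w0_def JF_def JF_T_def
      by (simp add: inner_add_left inner_add_right inner_diff_left inner_diff_right mv_inner
          transpose_transpose Dy Dz transpose_diag del: transpose_matrix_vector)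
  qed
  have linLT: "linear LT"
  proof (rule linearI)
    fix u v :: "(real^'n) \<times> (real^'q) \<times> (real^'p) \<times> (real^'p)" and k :: real
    obtain u1 u2 u3 u4 where u: "u = (u1, u2, u3, u4)" by (cases u) auto
    obtain v1 v2 v3 v4 where v: "v = (v1, v2, v3, v4)" by (cases v) auto
    show "LT (u + v) = LT u + LT v"
      unfolding u v LT_def w0_def JF_T_def
      by (simp add: matrix_vector_right_distrib del: transpose_matrix_vector)
    show "LT (k *\<^sub>R u) = k *\<^sub>R LT u"
      unfolding u LT_def w0_def JF_T_def
      by (simp add: matrix_vector_mult_scaleR scaleR_right_distrib scaleR_diff_right del: transpose_matrix_vector)
  qed
  have injLT: "inj LT"
  proof -
    have "v = 0" if "LT v = 0" for v
    proof -
      obtain d where "v = L d" using surjL by (metis surj_def)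
      then have "inner v v = inner d (LT v)" using adj by simp
      then show ?thesis using that by simp
    qed
    then show ?thesis using linLT by (simp add: linear_inj_iff_eq_0)
  qed
  have surjLT: "surj LT" using linLT injLT by (simp add: linear_injective_imp_surjective)
  have ker: "{d. L d = 0} = {0}" using inj0 linL linear_0 by blast
  show ?thesis
    using surjL tang reg lim surjLT ker
    by (simp add: L_def LT_def C_def w0_def)
qed

end
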